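(* Fix $d \geq 1$ and $\alpha < 1/d$, and let $k,\ell \ge 0$ be integers. If $k+\ell = 2d+1$, then with overwhelming probability a graph $H \sim H\big(n-(2d+1),\ n^{-k\alpha}(1-n^{-\alpha})^{\ell},\ n^{-\ell\alpha}(1-n^{-\alpha})^{k},\ n^{-\alpha}\big)$ is nonempty. If $k+\ell = 2d$, then with overwhelming probability $H \sim H\big(n-2d,\ n^{-k\alpha}(1-n^{-\alpha})^{\ell},\ n^{-\ell\alpha}(1-n^{-\alpha})^{k},\ n^{-\alpha}\big)$ is connected.
   Context: For $N \in \mathbb{N}$ and probabilities $p_A,p_B,p_{eA},p_{eB},p_{eAB}$ (with $p_A+p_B\le 1$), $H(N,p_A,p_B,p_{eA},p_{eB},p_{eAB})$ is the random graph obtained as follows: each element of $[N]$ independently is put in $A$ with probability $p_A$, in $B$ with probability $p_B$, or discarded with probability $1-p_A-p_B$; the vertex set is $A \cup B$; each pair inside $A$ is an edge independently with probability $p_{eA}$, each pair inside $B$ with probability $p_{eB}$, and each pair with one endpoint in $A$ and one in $B$ with probability $p_{eAB}$. The shorthand $H(N,p_A,p_B,q)$ means $H(N,p_A,p_B,q,q,1-q)$. "With overwhelming probability" means with probability at least $1 - n^{-\omega(1)}$ as $n\to\infty$. *)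

theory Defs
  imports "HOL-Probability.Probability"
begin

text \<open>Labels of the elements of [N] = {0..<N}: Some True = put in A,
  Some False = put in B, None = discarded.\<close>
definition label_pmf :: "real \<Rightarrow> real \<Rightarrow> bool option pmf" where
  "label_pmf pA pB = embed_pmf (\<lambda>x. case x of Some True \<Rightarrow> pA | Some False \<Rightarrow> pB | None \<Rightarrow> 1 - pA - pB)"

definition edge_prob :: "real \<Rightarrow> real \<Rightarrow> real \<Rightarrow> bool option \<Rightarrow> bool option \<Rightarrow> real" where
  "edge_prob peA peB peAB a b =
     (case (a, b) of (Some True, Some True) \<Rightarrow> peA
                   | (Some False, Some False) \<Rightarrow> peB
                   | (Some _, Some _) \<Rightarrow> peAB
                   | _ \<Rightarrow> 0)"

text \<open>A graph is a pair (V, E): vertex set V and edge set E of pairs (i,j) with i < j.\<close>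
type_synonym graph = "nat set \<times> (nat \<times> nat) set"

definition H :: "nat \<Rightarrow> real \<Rightarrow> real \<Rightarrow> real \<Rightarrow> real \<Rightarrow> real \<Rightarrow> graph pmf" where
  "H N pA pB peA peB peAB =
     do {
       lab \<leftarrow> Pi_pmf {..<N} None (\<lambda>_. label_pmf pA pB);
       coin \<leftarrow> Pi_pmf {(i, j). i < j \<and> j < N} False
                 (\<lambda>(i, j). bernoulli_pmf (edge_prob peA peB peAB (lab i) (lab j)));
       return_pmf ({i. i < N \<and> lab i \<noteq> None},
                   {(i, j). i < j \<and> j < N \<and> lab i \<noteq> None \<and> lab j \<noteq> None \<and> coin (i, j)})
     }"

definition Hq :: "nat \<Rightarrow> real \<Rightarrow> real \<Rightarrow> real \<Rightarrow> graph pmf" where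
  "Hq N pA pB q = H N pA pB q q (1 - q)"

definition graph_nonempty :: "graph \<Rightarrow> bool" where
  "graph_nonempty G \<longleftrightarrow> fst G \<noteq> {}"

definition graph_connected :: "graph \<Rightarrow> bool" where
  "graph_connected G \<longleftrightarrow> fst G \<noteq> {} \<and>
     (\<forall>u\<in>fst G. \<forall>v\<in>fst G. (u, v) \<in> (snd G \<union> (snd G)\<inverse>)\<^sup>*)"

text \<open>A family of events (indexed by n) holds with overwhelming probability if its
  probability is at least 1 - n^(-omega(1)), i.e. for every C > 0 it is eventually
  at least 1 - n^(-C).\<close>
definition overwhelming :: "(nat \<Rightarrow> real) \<Rightarrow> bool" where
  "overwhelming P \<longleftrightarrow> (\<forall>C>0. \<forall>\<^sub>F n in sequentially. P n \<ge> 1 - real n powr (- C))"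

end

theory Submission
  imports Defs "HOL-Real_Asymp.Real_Asymp"
begin

lemma UNIV_bool_option: "(UNIV :: bool option set) = {None, Some True, Some False}"
  by (auto simp: UNIV_option_conv)

lemma pmf_label:
  assumes "0 \<le> pA" "0 \<le> pB" "pA + pB \<le> 1"
  shows "pmf (label_pmf pA pB) y = (case y of Some True \<Rightarrow> pA | Some False \<Rightarrow> pB | None \<Rightarrow> 1 - pA - pB)"
  unfolding label_pmf_def
proof (rule pmf_embed_pmf)
  show "\<And>x. 0 \<le> (case x of Some True \<Rightarrow> pA | Some False \<Rightarrow> pB | None \<Rightarrow> 1 - pA - pB)"
    using assms by (auto split: option.split bool.split)
  show "(\<integral>\<^sup>+ x. ennreal (case x of Some True \<Rightarrow> pA | Some False \<Rightarrow> pB | None \<Rightarrow> 1 - pA - pB) \<partial>count_space UNIV) = 1"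
    using assms by (simp add: nn_integral_count_space_finite UNIV_bool_option ennreal_plus[symmetric] del: ennreal_plus)
qed

lemma prob_compl_single:
  "measure_pmf.prob M {y. y \<noteq> x} = 1 - pmf M x"
proof -
  have "{y. y \<noteq> x} = space (measure_pmf M) - {x}" by auto
  then show ?thesis
    using measure_pmf.prob_compl[of "{x}" M] by (simp add: measure_pmf_single)
qed

lemma bind_bound:
  assumes "\<And>x. x \<in> set_pmf M \<Longrightarrow> x \<notin> Bad \<Longrightarrow> measure_pmf.prob (f x) X \<le> e" "0 \<le> e"
  shows "measure_pmf.prob (bind_pmf M f) X \<le> measure_pmf.prob M Bad + e"
proof -
  have "emeasure (measure_pmf (bind_pmf M f)) X = (\<integral>\<^sup>+x. emeasure (measure_pmf (f x)) X \<partial>M)"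
    by simp
  also have "\<dots> \<le> (\<integral>\<^sup>+x. (indicator Bad x + ennreal e) \<partial>M)"
  proof (rule nn_integral_mono_AE)
    show "AE x in measure_pmf M. emeasure (measure_pmf (f x)) X \<le> indicator Bad x + ennreal e"
      unfolding AE_measure_pmf_iff
    proof (intro ballI)
      fix x assume x: "x \<in> set_pmf M"
      show "emeasure (measure_pmf (f x)) X \<le> indicator Bad x + ennreal e"
      proof (cases "x \<in> Bad")
        case True
        then show ?thesis using measure_pmf.emeasure_le_1[of "f x" X]
          by (simp add: order_trans[OF _ add_increasing2])
      next
        case False
        then show ?thesis using assms(1)[OF x False]
          by (simp add: measure_pmf.emeasure_eq_measure ennreal_leI)
      qed
    qed
  qed
  also have "\<dots> = emeasure (measure_pmf M) Bad + ennreal e"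
    by (subst nn_integral_add) (auto simp: measure_pmf.emeasure_space_1)
  finally show ?thesis
    using assms(2) by (simp add: measure_pmf.emeasure_eq_measure ennreal_plus[symmetric] del: ennreal_plus)
qed

lemma prob_Pi_sub:
  assumes "finite A" "T \<subseteq> A"
  shows "measure_pmf.prob (Pi_pmf A d p) {f. \<forall>i\<in>T. f i \<in> B i} = (\<Prod>i\<in>T. measure_pmf.prob (p i) (B i))"
proof -
  have "{f. \<forall>i\<in>T. f i \<in> B i} = Pi A (\<lambda>i. if i \<in> T then B i else UNIV)"
    using assms by (auto simp: Pi_def)
  then have "measure_pmf.prob (Pi_pmf A d p) {f. \<forall>i\<in>T. f i \<in> B i}
     = (\<Prod>i\<in>A. measure_pmf.prob (p i) (if i \<in> T then B i else UNIV))"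
    using assms by (simp add: measure_Pi_pmf_Pi)
  also have "\<dots> = (\<Prod>i\<in>T. measure_pmf.prob (p i) (B i))"
    using assms by (intro prod.mono_neutral_cong_right) auto
  finally show ?thesis .
qed

lemma edge_prob_sym: "edge_prob a a c x y = edge_prob a a c y x"
  unfolding edge_prob_def by (auto split: option.split bool.split)

lemma sum_Pow_pow:
  fixes y :: real
  assumes "finite X"
  shows "(\<Sum>S\<in>Pow X. y ^ card S) = (1 + y) ^ card X"
  using assms
proof (induction X rule: finite_induct)
  case empty
  then show ?case by simp
next
  case (insert a X)
  have "Pow (insert a X) = Pow X \<union> insert a ` Pow X" by (rule Pow_insert)
  moreover have "Pow X \<inter> insert a ` Pow X = {}" using insert by auto
  moreover have "inj_on (insert a) (Pow X)" using insert by (auto simp: inj_on_def)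
  ultimately have "(\<Sum>S\<in>Pow (insert a X). y ^ card S) = (\<Sum>S\<in>Pow X. y ^ card S) + (\<Sum>S\<in>Pow X. y ^ card (insert a S))"
    using insert by (simp add: sum.union_disjoint sum.reindex)
  also have "(\<Sum>S\<in>Pow X. y ^ card (insert a S)) = (\<Sum>S\<in>Pow X. y * y ^ card S)"
    using insert by (intro sum.cong) (auto simp: card_insert_if finite_subset dest: subsetD)
  finally show ?case using insert by (simp add: sum_distrib_left[symmetric] algebra_simps)
qed

definition Lp :: "nat \<Rightarrow> real \<Rightarrow> real \<Rightarrow> (nat \<Rightarrow> bool option) pmf" where
  "Lp N pA pB = Pi_pmf {..<N} None (\<lambda>_. label_pmf pA pB)"
definition Cp :: "nat \<Rightarrow> real \<Rightarrow> (nat \<Rightarrow> bool option) \<Rightarrow> (nat \<times> nat \<Rightarrow> bool) pmf" where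
  "Cp N q lab = Pi_pmf {(i, j). i < j \<and> j < N} False
                 (\<lambda>(i, j). bernoulli_pmf (edge_prob q q (1 - q) (lab i) (lab j)))"
definition gr :: "nat \<Rightarrow> (nat \<Rightarrow> bool option) \<Rightarrow> (nat \<times> nat \<Rightarrow> bool) \<Rightarrow> graph" where
  "gr N lab coin = ({i. i < N \<and> lab i \<noteq> None},
                   {(i, j). i < j \<and> j < N \<and> lab i \<noteq> None \<and> lab j \<noteq> None \<and> coin (i, j)})"

lemma Hq_eq: "Hq N pA pB q = bind_pmf (Lp N pA pB) (\<lambda>lab. map_pmf (gr N lab) (Cp N q lab))"
  unfolding Hq_def H_def Lp_def Cp_def gr_def map_pmf_def by simp

lemma Hq_bound:
  assumes "\<And>lab. lab \<in> set_pmf (Lp N pA pB) \<Longrightarrow> lab \<notin> Bad \<Longrightarrow>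
             measure_pmf.prob (Cp N q lab) {c. gr N lab c \<in> X} \<le> e" "0 \<le> e"
  shows "measure_pmf.prob (Hq N pA pB q) X \<le> measure_pmf.prob (Lp N pA pB) Bad + e"
  unfolding Hq_eq by (rule bind_bound) (use assms in \<open>auto simp: vimage_def\<close>)

lemma edge_prob_bounds:
  assumes "0 \<le> q" "q \<le> 1"
  shows "0 \<le> edge_prob q q (1 - q) a b" "edge_prob q q (1 - q) a b \<le> 1"
  using assms unfolding edge_prob_def by (auto split: option.split bool.split)

lemma coin_cut:
  assumes S: "S \<subseteq> {..<N}" and T: "T \<subseteq> {..<N}" and disj: "S \<inter> T = {}"
    and q: "0 \<le> q" "q \<le> 1" and c: "0 \<le> c"
    and bnd: "\<And>i j. i \<in> S \<Longrightarrow> j \<in> T \<Longrightarrow> 1 - edge_prob q q (1 - q) (lab i) (lab j) \<le> c"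
  shows "measure_pmf.prob (Cp N q lab) {co. \<forall>i\<in>S. \<forall>j\<in>T. \<not> co (min i j, max i j)}
           \<le> c ^ (card S * card T)"
proof -
  define g where "g = (\<lambda>(i::nat, j::nat). (min i j, max i j))"
  define E where "E = g ` (S \<times> T)"
  define ep where "ep = (\<lambda>(i, j). edge_prob q q (1 - q) (lab i) (lab j))"
  have finS: "finite S" and finT: "finite T" using S T finite_subset by auto
  have E_sub: "E \<subseteq> {(i, j). i < j \<and> j < N}"
    using S T disj by (force simp: E_def g_def min_def max_def)
  have inj: "inj_on g (S \<times> T)"
    using disj by (auto simp: inj_on_def g_def min_def max_def split: if_splits)
  have ev: "{co. \<forall>i\<in>S. \<forall>j\<in>T. \<not> co (min i j, max i j)} = {co. \<forall>e\<in>E. co e \<in> {False}}"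
    by (auto simp: E_def g_def)
  have "measure_pmf.prob (Cp N q lab) {co. \<forall>e\<in>E. co e \<in> {False}}
        = (\<Prod>e\<in>E. measure_pmf.prob (bernoulli_pmf (ep e)) {False})"
  proof -
    define pp where "pp = (\<lambda>(i::nat, j::nat). bernoulli_pmf (edge_prob q q (1 - q) (lab i) (lab j)))"
    have pp: "\<And>e. pp e = bernoulli_pmf (ep e)" by (auto simp: pp_def ep_def split: prod.split)
    have "Cp N q lab = Pi_pmf {(i, j). i < j \<and> j < N} False pp" by (simp add: Cp_def pp_def)
    moreover have "measure_pmf.prob (Pi_pmf {(i, j). i < j \<and> j < N} False pp) {co. \<forall>e\<in>E. co e \<in> {False}}
       = (\<Prod>e\<in>E. measure_pmf.prob (pp e) {False})"
      by (rule prob_Pi_sub[OF _ E_sub]) (rule finite_subset[of _ "{..<N} \<times> {..<N}"], auto)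
    ultimately show ?thesis by (simp add: pp)
  qed
  also have "\<dots> = (\<Prod>e\<in>E. 1 - ep e)"
    by (intro prod.cong refl) (auto simp: measure_pmf_single ep_def edge_prob_bounds[OF q])
  also have "\<dots> = (\<Prod>p\<in>S \<times> T. 1 - ep (g p))"
    unfolding E_def using prod.reindex[OF inj, of "\<lambda>e. 1 - ep e"] by (simp add: comp_def)
  also have "\<dots> \<le> (\<Prod>p\<in>S \<times> T. c)"
  proof (rule prod_mono, safe)
    fix i j assume ij: "i \<in> S" "j \<in> T"
    have "ep (g (i, j)) = edge_prob q q (1 - q) (lab i) (lab j)"
      by (auto simp: ep_def g_def min_def max_def edge_prob_sym)
    then show "0 \<le> 1 - ep (g (i, j))" "1 - ep (g (i, j)) \<le> c"
      using bnd[OF ij] edge_prob_bounds[OF q] by auto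
  qed
  also have "\<dots> = c ^ (card S * card T)"
    by (simp add: card_cartesian_product)
  finally show ?thesis using ev by simp
qed

lemma rtrancl_sym:
  assumes "sym R" "(a, b) \<in> R\<^sup>*"
  shows "(b, a) \<in> R\<^sup>*"
  using assms by (metis rtrancl_converseI sym_conv_converse_eq)

lemma cut_reach:
  assumes fin: "finite X" and u: "u \<in> X" and sym: "sym R"
    and cut: "\<And>S. S \<subseteq> X \<Longrightarrow> S \<noteq> {} \<Longrightarrow> 2 * card S \<le> card X \<Longrightarrow> \<exists>i\<in>S. \<exists>j\<in>X - S. (i, j) \<in> R"
  shows "\<forall>v\<in>X. (u, v) \<in> R\<^sup>*"
proof (rule ccontr)
  define Rc where "Rc = {v\<in>X. (u, v) \<in> R\<^sup>*}"
  assume "\<not> (\<forall>v\<in>X. (u, v) \<in> R\<^sup>*)"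
  then have ne: "X - Rc \<noteq> {}" by (auto simp: Rc_def)
  have uR: "u \<in> Rc" using u by (simp add: Rc_def)
  have sub: "Rc \<subseteq> X" by (auto simp: Rc_def)
  have cardsum: "card Rc + card (X - Rc) = card X"
    using fin sub by (simp add: card_Diff_subset card_mono finite_subset)
  show False
  proof (cases "2 * card Rc \<le> card X")
    case True
    then obtain i j where "i \<in> Rc" "j \<in> X - Rc" "(i, j) \<in> R"
      using cut[of Rc] uR by (auto simp: Rc_def)
    then show False by (auto simp: Rc_def intro: rtrancl_into_rtrancl)
  next
    case False
    then have "2 * card (X - Rc) \<le> card X" using cardsum by linarith
    then obtain i j where ij: "i \<in> X - Rc" "j \<in> X - (X - Rc)" "(i, j) \<in> R"
      using cut[of "X - Rc"] ne by blast
    then have "(j, i) \<in> R" using sym by (meson symD)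
    then show False using ij by (auto simp: Rc_def intro: rtrancl_into_rtrancl)
  qed
qed

lemma connected_of_hub:
  assumes "u \<in> fst G" "\<And>v. v \<in> fst G \<Longrightarrow> (u, v) \<in> (snd G \<union> (snd G)\<inverse>)\<^sup>*"
  shows "graph_connected G"
proof -
  have sym: "sym (snd G \<union> (snd G)\<inverse>)" by (auto simp: sym_def)
  show ?thesis unfolding graph_connected_def
  proof (intro conjI ballI)
    show "fst G \<noteq> {}" using assms(1) by auto
    fix v w assume "v \<in> fst G" "w \<in> fst G"
    then have "(v, u) \<in> (snd G \<union> (snd G)\<inverse>)\<^sup>*" "(u, w) \<in> (snd G \<union> (snd G)\<inverse>)\<^sup>*"
      using assms(2) rtrancl_sym[OF sym] by auto
    then show "(v, w) \<in> (snd G \<union> (snd G)\<inverse>)\<^sup>*" by (rule rtrancl_trans)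
  qed
qed

definition F :: "nat set \<Rightarrow> nat set \<Rightarrow> (nat \<times> nat \<Rightarrow> bool) set" where
  "F S T = {co. \<forall>i\<in>S. \<forall>j\<in>T. \<not> co (min i j, max i j)}"

lemma adjR:
  assumes "i < N" "j < N" "lab i \<noteq> None" "lab j \<noteq> None" "i \<noteq> j" "c (min i j, max i j)"
  shows "(i, j) \<in> snd (gr N lab c) \<union> (snd (gr N lab c))\<inverse>"
  using assms by (cases "i < j") (auto simp: gr_def min_def max_def)

lemma prob_union_sum:
  assumes "finite I"
  shows "measure_pmf.prob M (\<Union>i\<in>I. A i) \<le> (\<Sum>i\<in>I. measure_pmf.prob M (A i))"
  using assms by (intro measure_pmf.finite_measure_subadditive_finite) auto

lemma sparse_given:
  assumes x: "x \<noteq> None" and q: "0 \<le> q" "q \<le> 1/2"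
    and m0: "1 \<le> m0" "m0 \<le> card {i. i < N \<and> lab i = x}"
  shows "measure_pmf.prob (Cp N q lab) {c. \<not> graph_connected (gr N lab c)}
           \<le> (exp (real N * exp (- q * real m0 / 2)) - 1) + real N * exp (- q * real m0)"
proof -
  define X where "X = {i. i < N \<and> lab i = x}"
  define V where "V = {i. i < N \<and> lab i \<noteq> None}"
  define m where "m = card X"
  define Fam where "Fam = {S. S \<subseteq> X \<and> S \<noteq> {} \<and> 2 * card S \<le> card X}"
  define W where "W = V - X"
  define y where "y = exp (- q * real m / 2)"
  have XN: "X \<subseteq> {..<N}" by (auto simp: X_def)
  have finX: "finite X" using XN finite_subset by blast
  have XV: "X \<subseteq> V" using x by (auto simp: X_def V_def)
  have WN: "W \<subseteq> {..<N}" by (auto simp: W_def V_def)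
  have finW: "finite W" using WN finite_subset by blast
  have mm0: "m0 \<le> m" using m0 by (simp add: m_def X_def)
  have mN: "m \<le> N" unfolding m_def using card_mono[OF _ XN] by simp
  have finFam: "finite Fam" using finX by (auto simp: Fam_def intro: finite_subset[of _ "Pow X"])
  let ?R = "\<lambda>c. snd (gr N lab c) \<union> (snd (gr N lab c))\<inverse>"
  have sub: "{c. \<not> graph_connected (gr N lab c)} \<subseteq> (\<Union>S\<in>Fam. F S (X - S)) \<union> (\<Union>v\<in>W. F {v} X)"
  proof (rule subsetI, rule ccontr)
    fix c assume c: "c \<in> {c. \<not> graph_connected (gr N lab c)}"
      and nc: "c \<notin> (\<Union>S\<in>Fam. F S (X - S)) \<union> (\<Union>v\<in>W. F {v} X)"
    have "X \<noteq> {}" using m0 mm0 by (auto simp: m_def)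
    then obtain u where u: "u \<in> X" by blast
    have symR: "sym (?R c)" by (auto simp: sym_def)
    have reach: "\<forall>v\<in>X. (u, v) \<in> (?R c)\<^sup>*"
    proof (rule cut_reach[OF finX u symR])
      fix S assume S: "S \<subseteq> X" "S \<noteq> {}" "2 * card S \<le> card X"
      then have "S \<in> Fam" by (simp add: Fam_def)
      then have "c \<notin> F S (X - S)" using nc by blast
      then obtain i j where ij: "i \<in> S" "j \<in> X - S" "c (min i j, max i j)" by (auto simp: F_def)
      have "(i, j) \<in> ?R c"
        using ij S x by (intro adjR) (auto simp: X_def)
      then show "\<exists>i\<in>S. \<exists>j\<in>X - S. (i, j) \<in> ?R c" using ij by blast
    qed
    have "graph_connected (gr N lab c)"
    proof (rule connected_of_hub)
      show "u \<in> fst (gr N lab c)" using u XV by (auto simp: gr_def V_def)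
      fix v assume v: "v \<in> fst (gr N lab c)"
      show "(u, v) \<in> (?R c)\<^sup>*"
      proof (cases "v \<in> X")
        case True then show ?thesis using reach by blast
      next
        case False
        then have "v \<in> W" using v by (auto simp: W_def V_def gr_def)
        then have "c \<notin> F {v} X" using nc by blast
        then obtain j where j: "j \<in> X" "c (min v j, max v j)" by (auto simp: F_def)
        have "(v, j) \<in> ?R c"
          using j v False x by (intro adjR) (auto simp: X_def gr_def)
        then have "(j, v) \<in> ?R c" using symR by (meson symD)
        then show ?thesis using reach j by (meson rtrancl_into_rtrancl)
      qed
    qed
    then show False using c by simp
  qed
  have y0: "0 \<le> y" by (simp add: y_def)
  have termS: "measure_pmf.prob (Cp N q lab) (F S (X - S)) \<le> y ^ card S" if S: "S \<in> Fam" for S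
  proof -
    have SX: "S \<subseteq> X" and S2: "2 * card S \<le> m" using S by (auto simp: Fam_def m_def)
    have cXS: "card (X - S) = m - card S" using SX finX by (simp add: m_def card_Diff_subset finite_subset)
    have "measure_pmf.prob (Cp N q lab) (F S (X - S)) \<le> (1 - q) ^ (card S * card (X - S))"
      unfolding F_def
      by (rule coin_cut) (use SX XN q x in \<open>auto simp: X_def edge_prob_def split: option.split bool.split\<close>)
    also have "\<dots> \<le> exp (- q) ^ (card S * card (X - S))"
      using q by (intro power_mono) (auto simp: exp_ge_add_one_self[of "-q", simplified])
    also have "\<dots> = exp (- q * (real (card S) * real (m - card S)))"
      by (simp add: cXS exp_of_nat_mult[symmetric] mult.commute)
    also have "\<dots> \<le> exp (- q * (real (card S) * (real m / 2)))"
    proof -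
      have "real m / 2 \<le> real (m - card S)" using S2 by (simp add: of_nat_diff)
      then have "real (card S) * (real m / 2) \<le> real (card S) * real (m - card S)"
        by (intro mult_left_mono) auto
      then have "q * (real (card S) * (real m / 2)) \<le> q * (real (card S) * real (m - card S))"
        by (rule mult_left_mono[OF _ q(1)])
      then show ?thesis by simp
    qed
    also have "\<dots> = y ^ card S"
      by (simp add: y_def exp_of_nat_mult[symmetric] algebra_simps)
    finally show ?thesis .
  qed
  have sumS: "(\<Sum>S\<in>Fam. y ^ card S) \<le> (1 + y) ^ m - 1"
  proof -
    have "(\<Sum>S\<in>Fam. y ^ card S) \<le> (\<Sum>S\<in>Pow X - {{}}. y ^ card S)"
      by (rule sum_mono2) (use finX y0 in \<open>auto simp: Fam_def\<close>)
    also have "\<dots> = (\<Sum>S\<in>Pow X. y ^ card S) - 1"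
      using finX by (simp add: sum_diff1)
    also have "\<dots> = (1 + y) ^ m - 1" using sum_Pow_pow[OF finX] by (simp add: m_def)
    finally show ?thesis .
  qed
  have "(1 + y) ^ m \<le> exp y ^ m"
    using y0 by (intro power_mono) (auto simp: exp_ge_add_one_self add.commute)
  also have "\<dots> = exp (real m * y)" by (simp add: exp_of_nat_mult)
  also have "\<dots> \<le> exp (real N * exp (- q * real m0 / 2))"
  proof -
    have "exp (- q * real m / 2) \<le> exp (- q * real m0 / 2)"
      using q mm0 by (simp add: mult_left_mono)
    then have "real m * y \<le> real N * exp (- q * real m0 / 2)"
      unfolding y_def using mN by (intro mult_mono) auto
    then show ?thesis by simp
  qed
  finally have sumS': "(\<Sum>S\<in>Fam. y ^ card S) \<le> exp (real N * exp (- q * real m0 / 2)) - 1"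
    using sumS by linarith
  have termW: "measure_pmf.prob (Cp N q lab) (F {v} X) \<le> exp (- q * real m0)" if v: "v \<in> W" for v
  proof -
    have vv: "v < N" "lab v \<noteq> None" "lab v \<noteq> x" using v by (auto simp: W_def V_def X_def)
    have "measure_pmf.prob (Cp N q lab) (F {v} X) \<le> q ^ (card {v} * card X)"
      unfolding F_def
      by (rule coin_cut) (use vv XN q x in \<open>auto simp: X_def edge_prob_def split: option.split bool.split option.split_asm bool.split_asm\<close>)
    also have "\<dots> \<le> exp (- q) ^ m"
    proof -
      have "q \<le> exp (- q)" using q exp_ge_add_one_self[of "-q"] by linarith
      then show ?thesis using q by (simp add: m_def power_mono)
    qed
    also have "\<dots> = exp (- q * real m)" by (simp add: exp_of_nat_mult[symmetric] mult.commute)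
    also have "\<dots> \<le> exp (- q * real m0)" using q mm0 by (simp add: mult_left_mono)
    finally show ?thesis .
  qed
  have "measure_pmf.prob (Cp N q lab) {c. \<not> graph_connected (gr N lab c)}
        \<le> measure_pmf.prob (Cp N q lab) ((\<Union>S\<in>Fam. F S (X - S)) \<union> (\<Union>v\<in>W. F {v} X))"
    using sub by (intro measure_pmf.finite_measure_mono) auto
  also have "\<dots> \<le> measure_pmf.prob (Cp N q lab) (\<Union>S\<in>Fam. F S (X - S)) + measure_pmf.prob (Cp N q lab) (\<Union>v\<in>W. F {v} X)"
    by (rule measure_Un_le) auto
  also have "\<dots> \<le> (\<Sum>S\<in>Fam. measure_pmf.prob (Cp N q lab) (F S (X - S))) + (\<Sum>v\<in>W. measure_pmf.prob (Cp N q lab) (F {v} X))"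
    by (intro add_mono prob_union_sum finFam finW)
  also have "\<dots> \<le> (\<Sum>S\<in>Fam. y ^ card S) + (\<Sum>v\<in>W. exp (- q * real m0))"
    by (intro add_mono sum_mono termS termW)
  also have "\<dots> \<le> (exp (real N * exp (- q * real m0 / 2)) - 1) + real N * exp (- q * real m0)"
  proof -
    have "card W \<le> N" using card_mono[OF _ WN] by simp
    then have "(\<Sum>v\<in>W. exp (- q * real m0)) \<le> real N * exp (- q * real m0)"
      by (simp add: mult_right_mono)
    then show ?thesis using sumS' by linarith
  qed
  finally show ?thesis .
qed

lemma dense_given:
  assumes q: "0 \<le> q" "q \<le> 1/4"
    and m0: "1 \<le> m0" "m0 \<le> card {i. i < N \<and> lab i = Some True}" "m0 \<le> card {i. i < N \<and> lab i = Some False}"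
  shows "measure_pmf.prob (Cp N q lab) {c. \<not> graph_connected (gr N lab c)}
           \<le> real N * (2 * sqrt q) ^ m0 + real N * q ^ m0"
proof -
  define A where "A = {i. i < N \<and> lab i = Some True}"
  define B where "B = {i. i < N \<and> lab i = Some False}"
  define TF where "TF = {T. T \<subseteq> B \<and> card B \<le> 2 * card T}"
  have AN: "A \<subseteq> {..<N}" by (auto simp: A_def)
  have BN: "B \<subseteq> {..<N}" by (auto simp: B_def)
  have finA: "finite A" using AN finite_subset by blast
  have finB: "finite B" using BN finite_subset by blast
  have finTF: "finite TF" using finB by (auto simp: TF_def intro: finite_subset[of _ "Pow B"])
  have mA: "m0 \<le> card A" and mB: "m0 \<le> card B" using m0 by (simp_all add: A_def B_def)
  let ?R = "\<lambda>c. snd (gr N lab c) \<union> (snd (gr N lab c))\<inverse>"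
  have sub: "{c. \<not> graph_connected (gr N lab c)} \<subseteq> (\<Union>a\<in>A. \<Union>T\<in>TF. F {a} T) \<union> (\<Union>b\<in>B. F {b} A)"
  proof (rule subsetI, rule ccontr)
    fix c assume c: "c \<in> {c. \<not> graph_connected (gr N lab c)}"
      and nc: "c \<notin> (\<Union>a\<in>A. \<Union>T\<in>TF. F {a} T) \<union> (\<Union>b\<in>B. F {b} A)"
    have "A \<noteq> {}" using m0 mA by auto
    then obtain u where u: "u \<in> A" by blast
    have symR: "sym (?R c)" by (auto simp: sym_def)
    define Nb where "Nb = (\<lambda>a. {b\<in>B. c (min a b, max a b)})"
    have half: "2 * card (B - Nb a) < card B" if a: "a \<in> A" for a
    proof (rule ccontr)
      assume "\<not> 2 * card (B - Nb a) < card B"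
      then have "B - Nb a \<in> TF" by (auto simp: TF_def)
      then have "c \<notin> F {a} (B - Nb a)" using nc a by blast
      then show False by (auto simp: F_def Nb_def)
    qed
    have RA: "(i, j) \<in> ?R c" if "i \<in> A" "j \<in> B" "c (min i j, max i j)" for i j
      using that by (intro adjR) (auto simp: A_def B_def)
    have reachA: "(u, a) \<in> (?R c)\<^sup>*" if a: "a \<in> A" for a
    proof -
      have "card ((B - Nb u) \<union> (B - Nb a)) \<le> card (B - Nb u) + card (B - Nb a)"
        by (rule card_Un_le)
      also have "\<dots> < card B" using half[OF u] half[OF a] by linarith
      finally have "(B - Nb u) \<union> (B - Nb a) \<noteq> B" by auto
      then obtain b where b: "b \<in> B" "b \<in> Nb u" "b \<in> Nb a" by blast
      then have "(u, b) \<in> ?R c" "(a, b) \<in> ?R c" using RA u a by (auto simp: Nb_def)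
      then have "(u, b) \<in> ?R c" "(b, a) \<in> ?R c" using symR by (auto dest: symD)
      then show ?thesis by (meson r_into_rtrancl rtrancl_into_rtrancl)
    qed
    have "graph_connected (gr N lab c)"
    proof (rule connected_of_hub)
      show "u \<in> fst (gr N lab c)" using u by (auto simp: gr_def A_def)
      fix v assume v: "v \<in> fst (gr N lab c)"
      show "(u, v) \<in> (?R c)\<^sup>*"
      proof (cases "v \<in> A")
        case True then show ?thesis using reachA by blast
      next
        case False
        then have vB: "v \<in> B" using v by (auto simp: A_def B_def gr_def)
        then have "c \<notin> F {v} A" using nc by blast
        then obtain a where a: "a \<in> A" "c (min v a, max v a)" by (auto simp: F_def)
        have "(a, v) \<in> ?R c" using RA[OF a(1) vB] a(2) by (simp add: min.commute max.commute)
        then show ?thesis using reachA[OF a(1)] by (meson rtrancl_into_rtrancl)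
      qed
    qed
    then show False using c by simp
  qed
  have sq: "0 \<le> sqrt q" "sqrt q \<le> 1" "2 * sqrt q \<le> 1"
  proof -
    show "0 \<le> sqrt q" using q by simp
    have "sqrt q \<le> sqrt (1/4)" using q by (intro real_sqrt_le_mono) simp
    also have "sqrt (1/4) = (1/2::real)" by (simp add: real_sqrt_divide)
    finally show "sqrt q \<le> 1" "2 * sqrt q \<le> 1" by linarith+
  qed
  have termT: "measure_pmf.prob (Cp N q lab) (F {a} T) \<le> sqrt q ^ card B" if a: "a \<in> A" and T: "T \<in> TF" for a T
  proof -
    have TB: "T \<subseteq> B" "card B \<le> 2 * card T" using T by (auto simp: TF_def)
    have "measure_pmf.prob (Cp N q lab) (F {a} T) \<le> q ^ (card {a} * card T)"
      unfolding F_def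
      by (rule coin_cut) (use a TB BN q in \<open>auto simp: A_def B_def edge_prob_def\<close>)
    also have "\<dots> = sqrt q ^ (2 * card T)" using q by (simp add: power_mult)
    also have "\<dots> \<le> sqrt q ^ card B" using sq TB by (intro power_decreasing) auto
    finally show ?thesis .
  qed
  have termB: "measure_pmf.prob (Cp N q lab) (F {b} A) \<le> q ^ m0" if b: "b \<in> B" for b
  proof -
    have "measure_pmf.prob (Cp N q lab) (F {b} A) \<le> q ^ (card {b} * card A)"
      unfolding F_def
      by (rule coin_cut) (use b AN q in \<open>auto simp: A_def B_def edge_prob_def\<close>)
    also have "\<dots> \<le> q ^ m0" using q mA by (intro power_decreasing) auto
    finally show ?thesis .
  qed
  have inner: "measure_pmf.prob (Cp N q lab) (\<Union>T\<in>TF. F {a} T) \<le> (2 * sqrt q) ^ m0" if a: "a \<in> A" for a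
  proof -
    have "measure_pmf.prob (Cp N q lab) (\<Union>T\<in>TF. F {a} T) \<le> (\<Sum>T\<in>TF. measure_pmf.prob (Cp N q lab) (F {a} T))"
      by (rule prob_union_sum[OF finTF])
    also have "\<dots> \<le> (\<Sum>T\<in>TF. sqrt q ^ card B)" by (intro sum_mono termT a)
    also have "\<dots> \<le> (\<Sum>T\<in>Pow B. sqrt q ^ card B)"
      by (rule sum_mono2) (use finB sq in \<open>auto simp: TF_def\<close>)
    also have "\<dots> = (2 * sqrt q) ^ card B" using finB by (simp add: card_Pow power_mult_distrib)
    also have "\<dots> \<le> (2 * sqrt q) ^ m0" using sq mB by (intro power_decreasing) auto
    finally show ?thesis .
  qed
  have "measure_pmf.prob (Cp N q lab) {c. \<not> graph_connected (gr N lab c)}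
        \<le> measure_pmf.prob (Cp N q lab) ((\<Union>a\<in>A. \<Union>T\<in>TF. F {a} T) \<union> (\<Union>b\<in>B. F {b} A))"
    using sub by (intro measure_pmf.finite_measure_mono) auto
  also have "\<dots> \<le> measure_pmf.prob (Cp N q lab) (\<Union>a\<in>A. \<Union>T\<in>TF. F {a} T) + measure_pmf.prob (Cp N q lab) (\<Union>b\<in>B. F {b} A)"
    by (rule measure_Un_le) auto
  also have "\<dots> \<le> (\<Sum>a\<in>A. measure_pmf.prob (Cp N q lab) (\<Union>T\<in>TF. F {a} T)) + (\<Sum>b\<in>B. measure_pmf.prob (Cp N q lab) (F {b} A))"
    by (intro add_mono prob_union_sum finA finB)
  also have "\<dots> \<le> (\<Sum>a\<in>A. (2 * sqrt q) ^ m0) + (\<Sum>b\<in>B. q ^ m0)"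
    by (intro add_mono sum_mono inner termB)
  also have "\<dots> \<le> real N * (2 * sqrt q) ^ m0 + real N * q ^ m0"
  proof -
    have "card A \<le> N" "card B \<le> N" using card_mono[OF _ AN] card_mono[OF _ BN] by simp_all
    moreover have "0 \<le> (2 * sqrt q) ^ m0" "0 \<le> q ^ m0" using q by auto
    ultimately show ?thesis by (auto intro!: add_mono mult_right_mono)
  qed
  finally show ?thesis .
qed

lemma label_tail:
  assumes p: "0 \<le> pA" "0 \<le> pB" "pA + pB \<le> 1" and m0: "m0 \<le> N"
  shows "measure_pmf.prob (Lp N pA pB) {lab. card {i. i < N \<and> lab i = x} < m0}
           \<le> real (N choose m0) * (1 - pmf (label_pmf pA pB) x) ^ (N - m0)"
proof -
  define TT where "TT = {T. T \<subseteq> {..<N} \<and> card T = N - m0}"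
  define ev where "ev = (\<lambda>T. {lab::nat \<Rightarrow> bool option. \<forall>i\<in>T. lab i \<in> {y. y \<noteq> x}})"
  have finTT: "finite TT" by (auto simp: TT_def intro: finite_subset[of _ "Pow {..<N}"])
  have cardTT: "card TT = N choose m0"
    using n_subsets[of "{..<N}" "N - m0"] m0 by (simp add: TT_def binomial_symmetric[symmetric])
  have sub: "{lab. card {i. i < N \<and> lab i = x} < m0} \<subseteq> (\<Union>T\<in>TT. ev T)"
  proof
    fix lab assume lab: "lab \<in> {lab. card {i. i < N \<and> lab i = x} < m0}"
    define X where "X = {i. i < N \<and> lab i = x}"
    define Z where "Z = {..<N} - X"
    have XN: "X \<subseteq> {..<N}" by (auto simp: X_def)
    have "card Z = N - card X" using XN by (simp add: Z_def card_Diff_subset finite_subset)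
    then have "N - m0 \<le> card Z" using lab by (simp add: X_def)
    then obtain T where T: "T \<subseteq> Z" "card T = N - m0" by (meson obtain_subset_with_card_n)
    then have "T \<in> TT" by (auto simp: TT_def Z_def)
    moreover have "lab \<in> ev T" using T by (auto simp: ev_def Z_def X_def)
    ultimately show "lab \<in> (\<Union>T\<in>TT. ev T)" by blast
  qed
  have trm: "measure_pmf.prob (Lp N pA pB) (ev T) = (1 - pmf (label_pmf pA pB) x) ^ (N - m0)"
    if T: "T \<in> TT" for T
  proof -
    have "measure_pmf.prob (Lp N pA pB) (ev T) = (\<Prod>i\<in>T. measure_pmf.prob (label_pmf pA pB) {y. y \<noteq> x})"
      unfolding Lp_def ev_def by (rule prob_Pi_sub) (use T in \<open>auto simp: TT_def\<close>)
    then show ?thesis using T by (simp add: prob_compl_single TT_def)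
  qed
  have "measure_pmf.prob (Lp N pA pB) {lab. card {i. i < N \<and> lab i = x} < m0}
        \<le> measure_pmf.prob (Lp N pA pB) (\<Union>T\<in>TT. ev T)"
    using sub by (intro measure_pmf.finite_measure_mono) auto
  also have "\<dots> \<le> (\<Sum>T\<in>TT. measure_pmf.prob (Lp N pA pB) (ev T))"
    by (rule prob_union_sum[OF finTT])
  also have "\<dots> = real (N choose m0) * (1 - pmf (label_pmf pA pB) x) ^ (N - m0)"
    using trm cardTT by simp
  finally show ?thesis .
qed

lemma label_none:
  shows "measure_pmf.prob (Hq N pA pB q) {G. \<not> graph_nonempty G}
           \<le> pmf (label_pmf pA pB) None ^ N"
proof -
  define Bad where "Bad = {lab::nat \<Rightarrow> bool option. \<forall>i\<in>{..<N}. lab i \<in> {None}}"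
  have "measure_pmf.prob (Hq N pA pB q) {G. \<not> graph_nonempty G} \<le> measure_pmf.prob (Lp N pA pB) Bad + 0"
  proof (rule Hq_bound)
    fix lab assume "lab \<notin> Bad"
    then have "{c. gr N lab c \<in> {G. \<not> graph_nonempty G}} = {}"
      by (auto simp: Bad_def gr_def graph_nonempty_def)
    then show "measure_pmf.prob (Cp N q lab) {c. gr N lab c \<in> {G. \<not> graph_nonempty G}} \<le> 0" by simp
  qed simp
  also have "measure_pmf.prob (Lp N pA pB) Bad = (\<Prod>i\<in>{..<N}. measure_pmf.prob (label_pmf pA pB) {None})"
    unfolding Lp_def Bad_def by (rule prob_Pi_sub) auto
  also have "\<dots> = pmf (label_pmf pA pB) None ^ N" by (simp add: measure_pmf_single)
  finally show ?thesis by simp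
qed

lemma prob_not: "measure_pmf.prob M {G. P G} = 1 - measure_pmf.prob M {G. \<not> P G}"
proof -
  have "{G. P G} = space (measure_pmf M) - {G. \<not> P G}" by auto
  then show ?thesis using measure_pmf.prob_compl[of "{G. \<not> P G}" M] by simp
qed

lemma sparse_total:
  assumes x: "x \<noteq> None" and p: "0 \<le> pA" "0 \<le> pB" "pA + pB \<le> 1"
    and q: "0 \<le> q" "q \<le> 1/2" and m0: "1 \<le> m0" "m0 \<le> N"
  shows "measure_pmf.prob (Hq N pA pB q) {G. \<not> graph_connected G}
    \<le> real (N choose m0) * (1 - pmf (label_pmf pA pB) x) ^ (N - m0)
       + ((exp (real N * exp (- q * real m0 / 2)) - 1) + real N * exp (- q * real m0))"
proof -
  have "measure_pmf.prob (Hq N pA pB q) {G. \<not> graph_connected G}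
    \<le> measure_pmf.prob (Lp N pA pB) {lab. card {i. i < N \<and> lab i = x} < m0}
       + ((exp (real N * exp (- q * real m0 / 2)) - 1) + real N * exp (- q * real m0))"
  proof (rule Hq_bound)
    fix lab assume "lab \<notin> {lab. card {i. i < N \<and> lab i = x} < m0}"
    then have "m0 \<le> card {i. i < N \<and> lab i = x}" by simp
    then show "measure_pmf.prob (Cp N q lab) {c. gr N lab c \<in> {G. \<not> graph_connected G}}
       \<le> (exp (real N * exp (- q * real m0 / 2)) - 1) + real N * exp (- q * real m0)"
      using sparse_given[OF x q m0(1)] by simp
  next
    show "0 \<le> (exp (real N * exp (- q * real m0 / 2)) - 1) + real N * exp (- q * real m0)"
      by simp
  qed
  also have "\<dots> \<le> real (N choose m0) * (1 - pmf (label_pmf pA pB) x) ^ (N - m0)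
       + ((exp (real N * exp (- q * real m0 / 2)) - 1) + real N * exp (- q * real m0))"
    using label_tail[OF p m0(2)] by simp
  finally show ?thesis .
qed

lemma dense_total:
  assumes p: "0 \<le> pA" "0 \<le> pB" "pA + pB \<le> 1"
    and q: "0 \<le> q" "q \<le> 1/4" and m0: "1 \<le> m0" "m0 \<le> N"
  shows "measure_pmf.prob (Hq N pA pB q) {G. \<not> graph_connected G}
    \<le> real (N choose m0) * (1 - pmf (label_pmf pA pB) (Some True)) ^ (N - m0)
       + real (N choose m0) * (1 - pmf (label_pmf pA pB) (Some False)) ^ (N - m0)
       + (real N * (2 * sqrt q) ^ m0 + real N * q ^ m0)"
proof -
  define Bad where "Bad = {lab. card {i. i < N \<and> lab i = Some True} < m0}
                        \<union> {lab. card {i. i < N \<and> lab i = Some False} < m0}"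
  have "measure_pmf.prob (Hq N pA pB q) {G. \<not> graph_connected G}
    \<le> measure_pmf.prob (Lp N pA pB) Bad + (real N * (2 * sqrt q) ^ m0 + real N * q ^ m0)"
  proof (rule Hq_bound)
    fix lab assume "lab \<notin> Bad"
    then have "m0 \<le> card {i. i < N \<and> lab i = Some True}" "m0 \<le> card {i. i < N \<and> lab i = Some False}"
      by (auto simp: Bad_def)
    then show "measure_pmf.prob (Cp N q lab) {c. gr N lab c \<in> {G. \<not> graph_connected G}}
       \<le> real N * (2 * sqrt q) ^ m0 + real N * q ^ m0"
      using dense_given[OF q m0(1)] by simp
  next
    show "0 \<le> real N * (2 * sqrt q) ^ m0 + real N * q ^ m0" using q by simp
  qed
  also have "measure_pmf.prob (Lp N pA pB) Bad
     \<le> measure_pmf.prob (Lp N pA pB) {lab. card {i. i < N \<and> lab i = Some True} < m0}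
       + measure_pmf.prob (Lp N pA pB) {lab. card {i. i < N \<and> lab i = Some False} < m0}"
    unfolding Bad_def by (rule measure_Un_le) auto
  finally show ?thesis
    using label_tail[OF p m0(2), of "Some True"] label_tail[OF p m0(2), of "Some False"] by linarith
qed

lemma tail_pointwise:
  fixes n N m0 :: nat and p g e :: real
  assumes n: "1 \<le> n" and m0: "real m0 \<le> real n powr g + 1" and N: "N \<le> n"
    and Nm: "real n / 4 \<le> real N - real m0" and p: "real n powr (e - 1) / 2 \<le> p" "p \<le> 1"
  shows "real (N choose m0) * (1 - p) ^ (N - m0) \<le> exp ((real n powr g + 1) * ln (real n) - real n powr e / 8)"
proof -
  have "0 \<le> real n / 4" by simp
  then have "real m0 \<le> real N" using Nm by linarith
  then have mN: "m0 \<le> N" by simp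
  have "0 \<le> real n powr (e - 1)" by simp
  then have p0: "0 \<le> p" using p(1) by linarith
  have "real (N choose m0) \<le> real N ^ m0"
    using binomial_le_pow[OF mN] by (metis of_nat_le_iff of_nat_power)
  also have "\<dots> \<le> real n ^ m0" using N by (simp add: power_mono)
  also have "\<dots> = exp (real m0 * ln (real n))"
  proof -
    have "real n > 0" using n by simp
    then show ?thesis by (simp add: exp_of_nat_mult)
  qed
  also have "\<dots> \<le> exp ((real n powr g + 1) * ln (real n))"
    using m0 n by (simp add: mult_right_mono)
  finally have b1: "real (N choose m0) \<le> exp ((real n powr g + 1) * ln (real n))" .
  have "(1 - p) ^ (N - m0) \<le> exp (- p) ^ (N - m0)"
    using p p0 by (intro power_mono) (auto simp: exp_ge_add_one_self[of "-p", simplified])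
  also have "\<dots> = exp (- p * real (N - m0))" by (simp add: exp_of_nat_mult[symmetric] mult.commute)
  also have "\<dots> \<le> exp (- (real n powr (e - 1) / 2) * (real n / 4))"
  proof -
    have "real n / 4 \<le> real (N - m0)" using Nm mN by (simp add: of_nat_diff)
    then have "(real n powr (e - 1) / 2) * (real n / 4) \<le> p * real (N - m0)"
      using p p0 by (intro mult_mono) auto
    then show ?thesis by simp
  qed
  finally have b2': "(1 - p) ^ (N - m0) \<le> exp (- (real n powr (e - 1) / 2) * (real n / 4))" .
  have eq: "real n powr (e - 1) / 2 * (real n / 4) = real n powr e / 8"
  proof -
    have "real n powr (e - 1) * real n powr 1 = real n powr e" by (simp only: powr_add[symmetric]) simp
    moreover have "real n powr 1 = real n" using n by simp
    ultimately show ?thesis by simp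
  qed
  have b2: "(1 - p) ^ (N - m0) \<le> exp (- (real n powr e / 8))" using b2' eq by simp
  have "real (N choose m0) * (1 - p) ^ (N - m0) \<le> exp ((real n powr g + 1) * ln (real n)) * exp (- (real n powr e / 8))"
    using b1 b2 p by (intro mult_mono) auto
  also have "\<dots> = exp ((real n powr g + 1) * ln (real n) - real n powr e / 8)"
    by (simp add: exp_add[symmetric])
  finally show ?thesis .
qed

lemma ceil_facts:
  assumes "0 \<le> (x::real)"
  shows "x \<le> real (nat \<lceil>x\<rceil>)" "real (nat \<lceil>x\<rceil>) \<le> x + 1"
proof -
  have "real (nat \<lceil>x\<rceil>) = real_of_int \<lceil>x\<rceil>" using assms by simp
  then show "x \<le> real (nat \<lceil>x\<rceil>)" "real (nat \<lceil>x\<rceil>) \<le> x + 1"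
    using ceiling_correct[of x] by linarith+
qed

lemma nonempty_asym:
  assumes b: "0 < b"
    and pn: "eventually (\<lambda>n. pmf (label_pmf (pA n) (pB n)) None \<le> 1 - real n powr (b - 1) / 2) sequentially"
  shows "overwhelming (\<lambda>n. measure_pmf.prob (Hq (n - K) (pA n) (pB n) (q n)) {G. graph_nonempty G})"
  unfolding overwhelming_def
proof (intro allI impI)
  fix C :: real assume C: "0 < C"
  have ev1: "eventually (\<lambda>n::nat. exp ((real n powr (b/2) + 1) * ln (real n) - real n powr b / 8) \<le> real n powr (-C) / 4) sequentially"
    using b by real_asymp
  have ev2: "eventually (\<lambda>n::nat. real K + real n / 4 \<le> real n) sequentially"
    by real_asymp
  have ev3: "eventually (\<lambda>n::nat. 1 \<le> n) sequentially" by (rule eventually_ge_at_top)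
  show "eventually (\<lambda>n. 1 - real n powr (-C) \<le> measure_pmf.prob (Hq (n - K) (pA n) (pB n) (q n)) {G. graph_nonempty G}) sequentially"
    using ev1 ev2 ev3 pn
  proof eventually_elim
    case (elim n)
    define P0 where "P0 = pmf (label_pmf (pA n) (pB n)) None"
    have KN: "K \<le> n" using elim(2) by (smt (verit) of_nat_le_iff of_nat_0_le_iff divide_nonneg_pos)
    have Nreal: "real (n - K) = real n - real K" using KN by (simp add: of_nat_diff)
    have P01: "0 \<le> P0" "P0 \<le> 1" by (auto simp: P0_def pmf_le_1)
    have "real ((n - K) choose 0) * (1 - (1 - P0)) ^ (n - K - 0)
            \<le> exp ((real n powr (b/2) + 1) * ln (real n) - real n powr b / 8)"
    proof (rule tail_pointwise)
      show "1 \<le> n" by (rule elim(3))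
      show "real 0 \<le> real n powr (b / 2) + 1" by simp
      show "n - K \<le> n" by simp
      show "real n / 4 \<le> real (n - K) - real 0" using Nreal elim(2) by simp
      show "real n powr (b - 1) / 2 \<le> 1 - P0" using elim(4) by (simp add: P0_def)
      show "1 - P0 \<le> 1" using P01 by simp
    qed
    then have "P0 ^ (n - K) \<le> real n powr (-C) / 4" using elim(1) by simp
    moreover have "measure_pmf.prob (Hq (n - K) (pA n) (pB n) (q n)) {G. \<not> graph_nonempty G} \<le> P0 ^ (n - K)"
      unfolding P0_def by (rule label_none)
    moreover have "0 \<le> real n powr (-C)" by simp
    ultimately show ?case by (subst prob_not) linarith
  qed
qed

lemma powr_mult_alpha:
  assumes "1 \<le> n"
  shows "real n powr (- a) * real n powr g = real n powr (g - a)"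
proof -
  have "real n powr (- a) * real n powr g = real n powr (- a + g)" by (simp only: powr_add[symmetric])
  then show ?thesis by simp
qed

lemma sparse_asym:
  assumes a: "0 < \<alpha>" and eg: "0 < g" "g < e" "g < 1" "\<alpha> < g" and x: "x \<noteq> None"
    and ev: "eventually (\<lambda>n. 0 \<le> pA n \<and> 0 \<le> pB n \<and> pA n + pB n \<le> 1 \<and>
               real n powr (e - 1) / 2 \<le> pmf (label_pmf (pA n) (pB n)) x) sequentially"
  shows "overwhelming (\<lambda>n. measure_pmf.prob (Hq (n - K) (pA n) (pB n) (real n powr (- \<alpha>))) {G. graph_connected G})"
  unfolding overwhelming_def
proof (intro allI impI)
  fix C :: real assume C: "0 < C"
  have ev1: "eventually (\<lambda>n::nat. exp ((real n powr g + 1) * ln (real n) - real n powr e / 8) \<le> real n powr (-C) / 4) sequentially"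
    using eg by real_asymp
  have ev2: "eventually (\<lambda>n::nat. real K + real n / 4 + (real n powr g + 1) \<le> real n) sequentially"
    using eg by real_asymp
  have ev3: "eventually (\<lambda>n::nat. 1 \<le> n) sequentially" by (rule eventually_ge_at_top)
  have ev4: "eventually (\<lambda>n::nat. real n powr (- \<alpha>) \<le> 1/16) sequentially"
    using a by real_asymp
  have ev5: "eventually (\<lambda>n::nat. real n * exp (- (real n powr (g - \<alpha>)) / 2) \<le> 1/2) sequentially"
    using eg by real_asymp
  have ev6: "eventually (\<lambda>n::nat. real n * exp (- (real n powr (g - \<alpha>)) / 2) \<le> real n powr (-C) / 8) sequentially"
    using eg by real_asymp
  have ev7: "eventually (\<lambda>n::nat. real n * exp (- (real n powr (g - \<alpha>))) \<le> real n powr (-C) / 4) sequentially"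
    using eg by real_asymp
  show "eventually (\<lambda>n. 1 - real n powr (-C) \<le> measure_pmf.prob (Hq (n - K) (pA n) (pB n) (real n powr (- \<alpha>))) {G. graph_connected G}) sequentially"
    using ev1 ev2 ev3 ev4 ev5 ev6 ev7 ev
  proof eventually_elim
    case (elim n)
    define q where "q = real n powr (- \<alpha>)"
    define N where "N = n - K"
    define m0 where "m0 = nat \<lceil>real n powr g\<rceil>"
    define p where "p = pmf (label_pmf (pA n) (pB n)) x"
    have n1: "1 \<le> n" by (rule elim(3))
    have q: "0 \<le> q" "q \<le> 1/2" using elim(4) by (auto simp: q_def)
    have m0a: "real n powr g \<le> real m0" "real m0 \<le> real n powr g + 1"
      using ceil_facts[of "real n powr g"] by (auto simp: m0_def)
    have "0 \<le> real n / 4" by simp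
    moreover have "0 \<le> real n powr g" by simp
    ultimately have "real K \<le> real n" using elim(2) by linarith
    then have KN: "K \<le> n" by simp
    have Nreal: "real N = real n - real K" using KN by (simp add: N_def of_nat_diff)
    have m01: "1 \<le> m0"
    proof -
      have "1 \<le> real n powr g" using n1 eg by (simp add: ge_one_powr_ge_zero)
      then show ?thesis using m0a by linarith
    qed
    have "real m0 \<le> real N" using m0a elim(2) Nreal \<open>0 \<le> real n / 4\<close> by linarith
    then have m0N: "m0 \<le> N" by simp
    have pdat: "0 \<le> pA n" "0 \<le> pB n" "pA n + pB n \<le> 1" using elim(8) by auto
    have bound: "measure_pmf.prob (Hq N (pA n) (pB n) q) {G. \<not> graph_connected G}
      \<le> real (N choose m0) * (1 - p) ^ (N - m0)
       + ((exp (real N * exp (- q * real m0 / 2)) - 1) + real N * exp (- q * real m0))"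
      unfolding p_def by (rule sparse_total[OF x pdat q m01 m0N])
    have T1: "real (N choose m0) * (1 - p) ^ (N - m0) \<le> real n powr (-C) / 4"
    proof -
      have "real (N choose m0) * (1 - p) ^ (N - m0) \<le> exp ((real n powr g + 1) * ln (real n) - real n powr e / 8)"
      proof (rule tail_pointwise[OF n1 m0a(2)])
        show "N \<le> n" by (simp add: N_def)
        show "real n / 4 \<le> real N - real m0" using Nreal m0a elim(2) by linarith
        show "real n powr (e - 1) / 2 \<le> p" using elim(8) by (simp add: p_def)
        show "p \<le> 1" by (simp add: p_def pmf_le_1)
      qed
      then show ?thesis using elim(1) by linarith
    qed
    have qm: "real n powr (g - \<alpha>) \<le> q * real m0"
    proof -
      have "real n powr (g - \<alpha>) = q * real n powr g" using powr_mult_alpha[OF n1] by (simp add: q_def)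
      also have "\<dots> \<le> q * real m0" using m0a q by (intro mult_left_mono) auto
      finally show ?thesis .
    qed
    have NN: "real N \<le> real n" by (simp add: N_def)
    define z where "z = real n * exp (- (real n powr (g - \<alpha>)) / 2)"
    have z: "0 \<le> z" "z \<le> 1/2" "z \<le> real n powr (-C) / 8" using elim(5,6) by (auto simp: z_def)
    have T2: "exp (real N * exp (- q * real m0 / 2)) - 1 \<le> real n powr (-C) / 4"
    proof -
      have "real N * exp (- q * real m0 / 2) \<le> z"
        unfolding z_def using NN qm by (intro mult_mono) auto
      then have "exp (real N * exp (- q * real m0 / 2)) \<le> exp z" by simp
      also have "\<dots> \<le> 1 + 2 * z" by (rule real_exp_bound_lemma[OF z(1,2)])
      finally show ?thesis using z(3) by linarith
    qed
    have T3: "real N * exp (- q * real m0) \<le> real n powr (-C) / 4"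
    proof -
      have "real N * exp (- q * real m0) \<le> real n * exp (- (real n powr (g - \<alpha>)))"
        using NN qm by (intro mult_mono) auto
      then show ?thesis using elim(7) by linarith
    qed
    have "measure_pmf.prob (Hq N (pA n) (pB n) q) {G. \<not> graph_connected G} \<le> real n powr (-C)"
      using bound T1 T2 T3 powr_ge_zero[of "real n" "-C"] by linarith
    then show ?case unfolding N_def q_def by (subst prob_not) linarith
  qed
qed

lemma dense_asym:
  assumes a: "0 < \<alpha>" and eg: "0 < g" "g < e" "g < 1"
    and ev: "eventually (\<lambda>n. 0 \<le> pA n \<and> 0 \<le> pB n \<and> pA n + pB n \<le> 1 \<and>
               real n powr (e - 1) / 2 \<le> pmf (label_pmf (pA n) (pB n)) (Some True) \<and>
               real n powr (e - 1) / 2 \<le> pmf (label_pmf (pA n) (pB n)) (Some False)) sequentially"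
  shows "overwhelming (\<lambda>n. measure_pmf.prob (Hq (n - K) (pA n) (pB n) (real n powr (- \<alpha>))) {G. graph_connected G})"
  unfolding overwhelming_def
proof (intro allI impI)
  fix C :: real assume C: "0 < C"
  have ev1: "eventually (\<lambda>n::nat. exp ((real n powr g + 1) * ln (real n) - real n powr e / 8) \<le> real n powr (-C) / 4) sequentially"
    using eg by real_asymp
  have ev2: "eventually (\<lambda>n::nat. real K + real n / 4 + (real n powr g + 1) \<le> real n) sequentially"
    using eg by real_asymp
  have ev3: "eventually (\<lambda>n::nat. 1 \<le> n) sequentially" by (rule eventually_ge_at_top)
  have ev4: "eventually (\<lambda>n::nat. real n powr (- \<alpha>) \<le> 1/16) sequentially"
    using a by real_asymp
  have ev5: "eventually (\<lambda>n::nat. real n * (1/2) powr (real n powr g) \<le> real n powr (-C) / 8) sequentially"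
    using eg by real_asymp
  show "eventually (\<lambda>n. 1 - real n powr (-C) \<le> measure_pmf.prob (Hq (n - K) (pA n) (pB n) (real n powr (- \<alpha>))) {G. graph_connected G}) sequentially"
    using ev1 ev2 ev3 ev4 ev5 ev
  proof eventually_elim
    case (elim n)
    define q where "q = real n powr (- \<alpha>)"
    define N where "N = n - K"
    define m0 where "m0 = nat \<lceil>real n powr g\<rceil>"
    define pT where "pT = pmf (label_pmf (pA n) (pB n)) (Some True)"
    define pF where "pF = pmf (label_pmf (pA n) (pB n)) (Some False)"
    have n1: "1 \<le> n" by (rule elim(3))
    have q: "0 \<le> q" "q \<le> 1/4" "q \<le> 1/16" using elim(4) by (auto simp: q_def)
    have m0a: "real n powr g \<le> real m0" "real m0 \<le> real n powr g + 1"
      using ceil_facts[of "real n powr g"] by (auto simp: m0_def)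
    have "0 \<le> real n / 4" by simp
    moreover have "0 \<le> real n powr g" by simp
    ultimately have "real K \<le> real n" using elim(2) by linarith
    then have KN: "K \<le> n" by simp
    have Nreal: "real N = real n - real K" using KN by (simp add: N_def of_nat_diff)
    have m01: "1 \<le> m0"
    proof -
      have "1 \<le> real n powr g" using n1 eg by (simp add: ge_one_powr_ge_zero)
      then show ?thesis using m0a by linarith
    qed
    have "real m0 \<le> real N" using m0a elim(2) Nreal \<open>0 \<le> real n / 4\<close> by linarith
    then have m0N: "m0 \<le> N" by simp
    have pdat: "0 \<le> pA n" "0 \<le> pB n" "pA n + pB n \<le> 1" using elim(6) by auto
    have bound: "measure_pmf.prob (Hq N (pA n) (pB n) q) {G. \<not> graph_connected G}
      \<le> real (N choose m0) * (1 - pT) ^ (N - m0) + real (N choose m0) * (1 - pF) ^ (N - m0)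
       + (real N * (2 * sqrt q) ^ m0 + real N * q ^ m0)"
      unfolding pT_def pF_def by (rule dense_total[OF pdat q(1,2) m01 m0N])
    have tail: "real (N choose m0) * (1 - p) ^ (N - m0) \<le> real n powr (-C) / 4"
      if p: "real n powr (e - 1) / 2 \<le> p" "p \<le> 1" for p
    proof -
      have "real (N choose m0) * (1 - p) ^ (N - m0) \<le> exp ((real n powr g + 1) * ln (real n) - real n powr e / 8)"
      proof (rule tail_pointwise[OF n1 m0a(2)])
        show "N \<le> n" by (simp add: N_def)
        show "real n / 4 \<le> real N - real m0" using Nreal m0a elim(2) by linarith
      qed (use p in auto)
      then show ?thesis using elim(1) by linarith
    qed
    have T1: "real (N choose m0) * (1 - pT) ^ (N - m0) \<le> real n powr (-C) / 4"
      by (rule tail) (use elim(6) in \<open>auto simp: pT_def pmf_le_1\<close>)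
    have T2: "real (N choose m0) * (1 - pF) ^ (N - m0) \<le> real n powr (-C) / 4"
      by (rule tail) (use elim(6) in \<open>auto simp: pF_def pmf_le_1\<close>)
    have half: "(1/2::real) ^ m0 \<le> (1/2) powr (real n powr g)"
    proof -
      have "(1/2::real) ^ m0 = (1/2) powr (real m0)" by (simp add: powr_realpow)
      also have "\<dots> \<le> (1/2) powr (real n powr g)" using m0a by (intro powr_mono') auto
      finally show ?thesis .
    qed
    have sq: "0 \<le> 2 * sqrt q" "2 * sqrt q \<le> 1/2"
    proof -
      show "0 \<le> 2 * sqrt q" using q by simp
      have "sqrt q \<le> sqrt ((1/4)^2)" using q by (intro real_sqrt_le_mono) (simp add: power2_eq_square)
      also have "sqrt ((1/4::real)^2) = 1/4" by (simp only: real_sqrt_abs)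
      finally show "2 * sqrt q \<le> 1/2" by linarith
    qed
    have NN: "real N \<le> real n" by (simp add: N_def)
    have T3: "real N * (2 * sqrt q) ^ m0 \<le> real n powr (-C) / 8"
    proof -
      have "(2 * sqrt q) ^ m0 \<le> (1/2) ^ m0" using sq by (intro power_mono) auto
      then have "real N * (2 * sqrt q) ^ m0 \<le> real n * (1/2) powr (real n powr g)"
        using NN half sq by (intro mult_mono) auto
      then show ?thesis using elim(5) by linarith
    qed
    have T4: "real N * q ^ m0 \<le> real n powr (-C) / 8"
    proof -
      have "q ^ m0 \<le> (1/2) ^ m0" using q by (intro power_mono) auto
      then have "real N * q ^ m0 \<le> real n * (1/2) powr (real n powr g)"
        using NN half q by (intro mult_mono) auto
      then show ?thesis using elim(5) by linarith
    qed
    have "measure_pmf.prob (Hq N (pA n) (pB n) q) {G. \<not> graph_connected G} \<le> real n powr (-C)"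
      using bound T1 T2 T3 T4 powr_ge_zero[of "real n" "-C"] by linarith
    then show ?case unfolding N_def q_def by (subst prob_not) linarith
  qed
qed

lemma sum_le1:
  fixes y :: real
  assumes y: "0 \<le> y" "y \<le> 1/2" and kl: "1 \<le> k + l"
  shows "y ^ k * (1 - y) ^ l + y ^ l * (1 - y) ^ k \<le> 1"
proof -
  have a: "y ^ m \<le> y" if "1 \<le> m" for m :: nat
    using power_decreasing[of 1 m y] that y by simp
  have b: "(1 - y) ^ m \<le> 1 - y" if "1 \<le> m" for m :: nat
    using power_decreasing[of 1 m "1 - y"] that y by simp
  have c: "(1 - y) ^ m \<le> 1" for m :: nat using y by (simp add: power_le_one)
  have d: "0 \<le> y ^ m" "y ^ m \<le> 1" for m :: nat using y by (auto simp: power_le_one)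
  have e: "0 \<le> (1 - y) ^ m" for m :: nat using y by simp
  show ?thesis
  proof (cases "k = 0")
    case True
    then have "1 \<le> l" using kl by simp
    then show ?thesis using True a[of l] b[of l] by simp
  next
    case k: False
    show ?thesis
    proof (cases "l = 0")
      case True
      then have "1 \<le> k" using kl by simp
      then show ?thesis using True a[of k] b[of k] by simp
    next
      case False
      have "y ^ k * (1 - y) ^ l \<le> y ^ k" by (rule mult_left_le[OF c d(1)])
      also have "\<dots> \<le> y" using a[of k] k by simp
      finally have 1: "y ^ k * (1 - y) ^ l \<le> y" .
      have "y ^ l * (1 - y) ^ k \<le> y ^ l" by (rule mult_left_le[OF c d(1)])
      also have "\<dots> \<le> y" using a[of l] False by simp
      finally have 2: "y ^ l * (1 - y) ^ k \<le> y" .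
      show ?thesis using 1 2 y by linarith
    qed
  qed
qed

lemma pbounds:
  fixes n k l :: nat and \<alpha> :: real
  assumes n: "1 \<le> n" and a: "0 < \<alpha>" and q16: "real n powr (- \<alpha>) \<le> 1/16"
    and qkl: "real (k + l) * real n powr (- \<alpha>) \<le> 1/2" and kl: "1 \<le> k + l"
  defines "q \<equiv> real n powr (- \<alpha>)"
  defines "pA \<equiv> real n powr (- (real k * \<alpha>)) * (1 - q) ^ l"
  defines "pB \<equiv> real n powr (- (real l * \<alpha>)) * (1 - q) ^ k"
  shows "0 \<le> pA" "0 \<le> pB" "pA + pB \<le> 1"
    "\<And>j. k \<le> j \<Longrightarrow> real n powr (- (real j * \<alpha>)) / 2 \<le> pA"
    "\<And>j. l \<le> j \<Longrightarrow> real n powr (- (real j * \<alpha>)) / 2 \<le> pB"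
proof -
  have q: "0 \<le> q" "q \<le> 1/16" using q16 by (auto simp: q_def)
  have qpos: "0 < q" using n by (simp add: q_def)
  show pA0: "0 \<le> pA" "0 \<le> pB" using q by (auto simp: pA_def pB_def)
  have pw: "real n powr (- (real m * \<alpha>)) = q ^ m" for m :: nat
  proof -
    have "q ^ m = q powr real m" using qpos by (simp add: powr_realpow)
    also have "\<dots> = real n powr (- \<alpha> * real m)" by (simp add: q_def powr_powr)
    finally show ?thesis by (simp add: mult.commute)
  qed
  show "pA + pB \<le> 1"
    unfolding pA_def pB_def pw using sum_le1[of q k l] q kl by simp
  have half: "1/2 \<le> (1 - q) ^ m" if "m \<le> k + l" for m
  proof -
    have "1 + real m * (- q) \<le> (1 + - q) ^ m" using q by (intro Bernoulli_inequality) auto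
    moreover have "real m * q \<le> 1/2"
    proof -
      have "real m * q \<le> real (k + l) * q" using that q by (intro mult_right_mono) auto
      then show ?thesis using qkl by (simp add: q_def)
    qed
    ultimately show ?thesis by simp
  qed
  have low: "real n powr (- (real j * \<alpha>)) / 2 \<le> real n powr (- (real m * \<alpha>)) * (1 - q) ^ m'"
    if "m \<le> j" "m' \<le> k + l" for j m m' :: nat
  proof -
    have "real n powr (- (real j * \<alpha>)) \<le> real n powr (- (real m * \<alpha>))"
      using n that a by (intro powr_mono) (auto intro: mult_right_mono)
    moreover have "0 \<le> real n powr (- (real j * \<alpha>))" by simp
    ultimately have "real n powr (- (real j * \<alpha>)) * (1/2) \<le> real n powr (- (real m * \<alpha>)) * (1 - q) ^ m'"
      using half[OF that(2)] by (intro mult_mono) auto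
    then show ?thesis by simp
  qed
  show "\<And>j. k \<le> j \<Longrightarrow> real n powr (- (real j * \<alpha>)) / 2 \<le> pA"
    unfolding pA_def by (rule low) auto
  show "\<And>j. l \<le> j \<Longrightarrow> real n powr (- (real j * \<alpha>)) / 2 \<le> pB"
    unfolding pB_def by (rule low) auto
qed

theorem lemma4p4:
  fixes d k l :: nat and \<alpha> :: real
  assumes "d \<ge> 1" and "0 < \<alpha>" and "\<alpha> < 1 / real d"
  shows "(k + l = 2 * d + 1 \<longrightarrow>
            overwhelming (\<lambda>n. measure_pmf.prob
              (Hq (n - (2 * d + 1))
                  (real n powr (- (real k * \<alpha>)) * (1 - real n powr (- \<alpha>)) ^ l)
                  (real n powr (- (real l * \<alpha>)) * (1 - real n powr (- \<alpha>)) ^ k)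
                  (real n powr (- \<alpha>)))
              {G. graph_nonempty G}))
       \<and> (k + l = 2 * d \<longrightarrow>
            overwhelming (\<lambda>n. measure_pmf.prob
              (Hq (n - 2 * d)
                  (real n powr (- (real k * \<alpha>)) * (1 - real n powr (- \<alpha>)) ^ l)
                  (real n powr (- (real l * \<alpha>)) * (1 - real n powr (- \<alpha>)) ^ k)
                  (real n powr (- \<alpha>)))
              {G. graph_connected G}))"
proof -
  define pA where "pA = (\<lambda>n::nat. real n powr (- (real k * \<alpha>)) * (1 - real n powr (- \<alpha>)) ^ l)"
  define pB where "pB = (\<lambda>n::nat. real n powr (- (real l * \<alpha>)) * (1 - real n powr (- \<alpha>)) ^ k)"
  have a: "0 < \<alpha>" by (rule assms(2))
  have d1: "1 \<le> d" by (rule assms(1))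
  have da: "real d * \<alpha> < 1"
    using assms(3) d1 by (simp add: less_divide_eq mult.commute)
  have evq: "eventually (\<lambda>n::nat. 1 \<le> n \<and> real n powr (- \<alpha>) \<le> 1/16 \<and> real (k + l) * real n powr (- \<alpha>) \<le> 1/2) sequentially"
  proof -
    have "eventually (\<lambda>n::nat. 1 \<le> n) sequentially" by (rule eventually_ge_at_top)
    moreover have "eventually (\<lambda>n::nat. real n powr (- \<alpha>) \<le> 1/16) sequentially" using a by real_asymp
    moreover have "eventually (\<lambda>n::nat. real (k + l) * real n powr (- \<alpha>) \<le> 1/2) sequentially" using a by real_asymp
    ultimately show ?thesis by eventually_elim auto
  qed
  have PB: "eventually (\<lambda>n. 0 \<le> pA n \<and> 0 \<le> pB n \<and> pA n + pB n \<le> 1 \<and>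
       (\<forall>j. k \<le> j \<longrightarrow> real n powr (- (real j * \<alpha>)) / 2 \<le> pA n) \<and>
       (\<forall>j. l \<le> j \<longrightarrow> real n powr (- (real j * \<alpha>)) / 2 \<le> pB n)) sequentially"
    if kl: "1 \<le> k + l"
    using evq
  proof eventually_elim
    case (elim n)
    then show ?case
      using pbounds[OF _ a _ _ kl, of n] unfolding pA_def pB_def by auto
  qed
  have pmfs: "pmf (label_pmf (pA n) (pB n)) None = 1 - pA n - pB n
            \<and> pmf (label_pmf (pA n) (pB n)) (Some True) = pA n
            \<and> pmf (label_pmf (pA n) (pB n)) (Some False) = pB n"
    if "0 \<le> pA n" "0 \<le> pB n" "pA n + pB n \<le> 1" for n
    using pmf_label[OF that] by simp
  show ?thesis
  proof (intro conjI impI)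
    assume kl: "k + l = 2 * d + 1"
    have kl1: "1 \<le> k + l" using kl d1 by simp
    have "overwhelming (\<lambda>n. measure_pmf.prob (Hq (n - (2 * d + 1)) (pA n) (pB n) (real n powr (- \<alpha>))) {G. graph_nonempty G})"
    proof (rule nonempty_asym[of "1 - real d * \<alpha>"])
      show "0 < 1 - real d * \<alpha>" using da by simp
      show "eventually (\<lambda>n. pmf (label_pmf (pA n) (pB n)) None \<le> 1 - real n powr (1 - real d * \<alpha> - 1) / 2) sequentially"
        using PB[OF kl1]
      proof eventually_elim
        case (elim n)
        have "real n powr (- (real d * \<alpha>)) / 2 \<le> pA n + pB n"
        proof (cases "k \<le> d")
          case True then show ?thesis using elim by auto
        next
          case False then have "l \<le> d" using kl by simp
          then show ?thesis using elim by auto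
        qed
        then show ?case using pmfs[of n] elim by simp
      qed
    qed
    then show "overwhelming (\<lambda>n. measure_pmf.prob
              (Hq (n - (2 * d + 1))
                  (real n powr (- (real k * \<alpha>)) * (1 - real n powr (- \<alpha>)) ^ l)
                  (real n powr (- (real l * \<alpha>)) * (1 - real n powr (- \<alpha>)) ^ k)
                  (real n powr (- \<alpha>)))
              {G. graph_nonempty G})" by (simp add: pA_def pB_def)
  next
    assume kl: "k + l = 2 * d"
    have kl1: "1 \<le> k + l" using kl d1 by simp
    have "overwhelming (\<lambda>n. measure_pmf.prob (Hq (n - 2 * d) (pA n) (pB n) (real n powr (- \<alpha>))) {G. graph_connected G})"
    proof (cases "k = l")
      case True
      then have kd: "k = d" "l = d" using kl by auto
      show ?thesis
      proof (rule dense_asym[of \<alpha> "(1 - real d * \<alpha>) / 2" "1 - real d * \<alpha>"])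
        show "0 < \<alpha>" by (rule a)
        show "0 < (1 - real d * \<alpha>) / 2" "(1 - real d * \<alpha>) / 2 < 1 - real d * \<alpha>" using da by (simp_all add: mult.commute)
        show "(1 - real d * \<alpha>) / 2 < 1" proof -
          have "0 \<le> real d * \<alpha>" using a by simp
          then show ?thesis by (simp add: field_simps)
        qed
        show "eventually (\<lambda>n. 0 \<le> pA n \<and> 0 \<le> pB n \<and> pA n + pB n \<le> 1 \<and>
               real n powr (1 - real d * \<alpha> - 1) / 2 \<le> pmf (label_pmf (pA n) (pB n)) (Some True) \<and>
               real n powr (1 - real d * \<alpha> - 1) / 2 \<le> pmf (label_pmf (pA n) (pB n)) (Some False)) sequentially"
          using PB[OF kl1]
        proof eventually_elim
          case (elim n)
          then show ?case using pmfs[of n] kd by auto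
        qed
      qed
    next
      case False
      define e where "e = 1 - real (d - 1) * \<alpha>"
      define g where "g = (1 - real d * \<alpha>) / 2 + \<alpha>"
      have rd: "real (d - 1) = real d - 1" using d1 by (simp add: of_nat_diff)
      have e1: "e \<le> 1" using a d1 rd by (simp add: e_def)
      have ta: "\<alpha> \<le> real d * \<alpha>" using a d1 by simp
      have er: "real (d - 1) * \<alpha> = real d * \<alpha> - \<alpha>" using rd by (simp add: algebra_simps)
      have g2: "2 * g = 1 - real d * \<alpha> + 2 * \<alpha>" unfolding g_def by (simp add: field_simps)
      have eg: "0 < g" "g < e" "g < 1" "\<alpha> < g"
        using da a ta g2 unfolding e_def er by linarith+
      have e1': "e - 1 = - (real (d - 1) * \<alpha>)" by (simp add: e_def)
      show ?thesis
      proof (cases "k < l")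
        case True
        then have kd: "k \<le> d - 1" using kl by simp
        show ?thesis
        proof (rule sparse_asym[of \<alpha> g e "Some True"])
          show "eventually (\<lambda>n. 0 \<le> pA n \<and> 0 \<le> pB n \<and> pA n + pB n \<le> 1 \<and>
               real n powr (e - 1) / 2 \<le> pmf (label_pmf (pA n) (pB n)) (Some True)) sequentially"
            using PB[OF kl1]
          proof eventually_elim
            case (elim n)
            then show ?case using pmfs[of n] kd e1' by auto
          qed
        qed (use a eg in auto)
      next
        case False
        then have ld: "l \<le> d - 1" using kl \<open>k \<noteq> l\<close> by simp
        show ?thesis
        proof (rule sparse_asym[of \<alpha> g e "Some False"])
          show "eventually (\<lambda>n. 0 \<le> pA n \<and> 0 \<le> pB n \<and> pA n + pB n \<le> 1 \<and>
               real n powr (e - 1) / 2 \<le> pmf (label_pmf (pA n) (pB n)) (Some False)) sequentially"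
            using PB[OF kl1]
          proof eventually_elim
            case (elim n)
            then show ?case using pmfs[of n] ld e1' by auto
          qed
        qed (use a eg in auto)
      qed
    qed
    then show "overwhelming (\<lambda>n. measure_pmf.prob
              (Hq (n - 2 * d)
                  (real n powr (- (real k * \<alpha>)) * (1 - real n powr (- \<alpha>)) ^ l)
                  (real n powr (- (real l * \<alpha>)) * (1 - real n powr (- \<alpha>)) ^ k)
                  (real n powr (- \<alpha>)))
              {G. graph_connected G})" by (simp add: pA_def pB_def)
  qed
qed

end
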